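(* Let $A$ be an integral residuated $\vee$-semilattice. Then: (1) if $A$ is a $\to$-MTL-algebra, the $\to$-prime filters of $A$ are exactly the $\vee$-prime filters of $A$; (2) if $A$ is a $\leadsto$-MTL-algebra, the $\leadsto$-prime filters of $A$ are exactly the $\vee$-prime filters of $A$; (3) if $A$ is a pseudo MTL-algebra, the prime filters of $A$ are exactly the $\vee$-prime filters of $A$.
   Context: A residuated poset is a partially ordered semigroup $(A;\cdot,\le)$ with binary operations $\to,\leadsto$ such that $x\cdot y\le z$ iff $x\le y\to z$ iff $y\le x\leadsto z$. It is a residuated $\vee$-semilattice if $(A,\le)$ is a join-semilattice, and integral if it has a greatest element $1$ that is a multiplicative identity. A filter is a nonempty upward closed subset closed under $\cdot$. A filter $F$ is $\to$-prime if for all $x,y$, $x\to y\in F$ or $y\to x\in F$; $\leadsto$-prime if for all $x,y$, $x\leadsto y\in F$ or $y\leadsto x\in F$; prime if both; $\vee$-prime if $x\vee y\in F$ implies $x\in F$ or $y\in F$. $A$ is a $\to$-MTL-algebra if $(x\to y)\vee(y\to x)=1$ for all $x,y$; a $\leadsto$-MTL-algebra if $(x\leadsto y)\vee(y\leadsto x)=1$ for all $x,y$; a pseudo MTL-algebra if both. *)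

theory Defs
  imports Main
begin

text \<open>An algebra is given on the whole type 'a by: a relation le (partial order),
a multiplication m, residuals imp (\<rightarrow>) and limp (\<leadsto>), a binary join j
and a top element one.\<close>

definition res_poset ::
  "('a \<Rightarrow> 'a \<Rightarrow> bool) \<Rightarrow> ('a \<Rightarrow> 'a \<Rightarrow> 'a) \<Rightarrow> ('a \<Rightarrow> 'a \<Rightarrow> 'a) \<Rightarrow> ('a \<Rightarrow> 'a \<Rightarrow> 'a) \<Rightarrow> bool" where
  "res_poset le m imp limp \<longleftrightarrow>
     (\<forall>x. le x x) \<and>
     (\<forall>x y. le x y \<and> le y x \<longrightarrow> x = y) \<and>
     (\<forall>x y z. le x y \<and> le y z \<longrightarrow> le x z) \<and>
     (\<forall>x y z. m (m x y) z = m x (m y z)) \<and>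
     (\<forall>x y z. le x y \<longrightarrow> le (m x z) (m y z) \<and> le (m z x) (m z y)) \<and>
     (\<forall>x y z. (le (m x y) z \<longleftrightarrow> le x (imp y z)) \<and> (le (m x y) z \<longleftrightarrow> le y (limp x z)))"

definition is_join :: "('a \<Rightarrow> 'a \<Rightarrow> bool) \<Rightarrow> ('a \<Rightarrow> 'a \<Rightarrow> 'a) \<Rightarrow> bool" where
  "is_join le j \<longleftrightarrow> (\<forall>x y z. le x (j x y) \<and> le y (j x y) \<and> (le x z \<and> le y z \<longrightarrow> le (j x y) z))"

definition int_res_join_semilattice ::
  "('a \<Rightarrow> 'a \<Rightarrow> bool) \<Rightarrow> ('a \<Rightarrow> 'a \<Rightarrow> 'a) \<Rightarrow> ('a \<Rightarrow> 'a \<Rightarrow> 'a) \<Rightarrow> ('a \<Rightarrow> 'a \<Rightarrow> 'a)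
   \<Rightarrow> ('a \<Rightarrow> 'a \<Rightarrow> 'a) \<Rightarrow> 'a \<Rightarrow> bool" where
  "int_res_join_semilattice le m imp limp j one \<longleftrightarrow>
     res_poset le m imp limp \<and> is_join le j \<and>
     (\<forall>x. le x one) \<and> (\<forall>x. m one x = x \<and> m x one = x)"

definition is_filter :: "('a \<Rightarrow> 'a \<Rightarrow> bool) \<Rightarrow> ('a \<Rightarrow> 'a \<Rightarrow> 'a) \<Rightarrow> 'a set \<Rightarrow> bool" where
  "is_filter le m F \<longleftrightarrow> F \<noteq> {} \<and> (\<forall>x y. x \<in> F \<and> le x y \<longrightarrow> y \<in> F) \<and>
     (\<forall>x y. x \<in> F \<and> y \<in> F \<longrightarrow> m x y \<in> F)"

definition res_prime :: "('a \<Rightarrow> 'a \<Rightarrow> 'a) \<Rightarrow> 'a set \<Rightarrow> bool" where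
  "res_prime r F \<longleftrightarrow> (\<forall>x y. r x y \<in> F \<or> r y x \<in> F)"

definition join_prime :: "('a \<Rightarrow> 'a \<Rightarrow> 'a) \<Rightarrow> 'a set \<Rightarrow> bool" where
  "join_prime j F \<longleftrightarrow> (\<forall>x y. j x y \<in> F \<longrightarrow> x \<in> F \<or> y \<in> F)"

definition mtl_wrt :: "('a \<Rightarrow> 'a \<Rightarrow> 'a) \<Rightarrow> ('a \<Rightarrow> 'a \<Rightarrow> 'a) \<Rightarrow> 'a \<Rightarrow> bool" where
  "mtl_wrt r j one \<longleftrightarrow> (\<forall>x y. j (r x y) (r y x) = one)"

end

theory Submission
  imports Defs
begin

lemma imp_part:
  assumes A: "int_res_join_semilattice le m imp limp j one"
    and F: "is_filter le m F"
  shows "res_prime imp F \<Longrightarrow> join_prime j F"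
    and "mtl_wrt imp j one \<Longrightarrow> join_prime j F \<Longrightarrow> res_prime imp F"
    and "res_prime limp F \<Longrightarrow> join_prime j F"
    and "mtl_wrt limp j one \<Longrightarrow> join_prime j F \<Longrightarrow> res_prime limp F"
proof -
  have refl: "\<And>x. le x x" and antis: "\<And>x y. le x y \<Longrightarrow> le y x \<Longrightarrow> x = y"
    and trans: "\<And>x y z. le x y \<Longrightarrow> le y z \<Longrightarrow> le x z"
    and mono: "\<And>x y z. le x y \<Longrightarrow> le (m x z) (m y z) \<and> le (m z x) (m z y)"
    and res1: "\<And>x y z. le (m x y) z \<longleftrightarrow> le x (imp y z)"
    and res2: "\<And>x y z. le (m x y) z \<longleftrightarrow> le y (limp x z)"
    and j1: "\<And>x y. le x (j x y)" and j2: "\<And>x y. le y (j x y)"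
    and j3: "\<And>x y z. le x z \<Longrightarrow> le y z \<Longrightarrow> le (j x y) z"
    and top: "\<And>x. le x one" and u1: "\<And>x. m one x = x" and u2: "\<And>x. m x one = x"
  proof -
    have A': "res_poset le m imp limp \<and> is_join le j \<and> (\<forall>x. le x one) \<and> (\<forall>x. m one x = x \<and> m x one = x)"
      using A unfolding int_res_join_semilattice_def .
    note R = A'[THEN conjunct1] and J = A'[THEN conjunct2, THEN conjunct1]
      and T = A'[THEN conjunct2, THEN conjunct2, THEN conjunct1]
      and U = A'[THEN conjunct2, THEN conjunct2, THEN conjunct2]
    note R' = R[unfolded res_poset_def] and J' = J[unfolded is_join_def]
    have h1: "\<forall>x. le x x" using R' by (elim conjE) assumption
    have h2: "\<forall>x y. le x y \<and> le y x \<longrightarrow> x = y" using R' by (elim conjE) assumption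
    have h3: "\<forall>x y z. le x y \<and> le y z \<longrightarrow> le x z" using R' by (elim conjE) assumption
    have h4: "\<forall>x y z. le x y \<longrightarrow> le (m x z) (m y z) \<and> le (m z x) (m z y)" using R' by (elim conjE) assumption
    have h5: "\<forall>x y z. (le (m x y) z \<longleftrightarrow> le x (imp y z)) \<and> (le (m x y) z \<longleftrightarrow> le y (limp x z))" using R' by (elim conjE) assumption
    show "\<And>x. le x x" using h1 by blast
    show "\<And>x y. le x y \<Longrightarrow> le y x \<Longrightarrow> x = y" using h2 by blast
    show "\<And>x y z. le x y \<Longrightarrow> le y z \<Longrightarrow> le x z" using h3 by blast
    show "\<And>x y z. le x y \<Longrightarrow> le (m x z) (m y z) \<and> le (m z x) (m z y)" using h4 by blast
    show "\<And>x y z. le (m x y) z \<longleftrightarrow> le x (imp y z)" using h5 by blast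
    show "\<And>x y z. le (m x y) z \<longleftrightarrow> le y (limp x z)" using h5 by blast
    show "\<And>x y. le x (j x y)" using J' by blast
    show "\<And>x y. le y (j x y)" using J' by blast
    show "\<And>x y z. le x z \<Longrightarrow> le y z \<Longrightarrow> le (j x y) z" using J' by blast
    show "\<And>x. le x one" using T by blast
    show "\<And>x. m one x = x" using U by blast
    show "\<And>x. m x one = x" using U by blast
  qed
  have ne: "F \<noteq> {}" and up: "\<And>x y. x \<in> F \<Longrightarrow> le x y \<Longrightarrow> y \<in> F"
    and mu: "\<And>x y. x \<in> F \<Longrightarrow> y \<in> F \<Longrightarrow> m x y \<in> F"
    using F unfolding is_filter_def by blast+
  have oneF: "one \<in> F" using ne up top by blast
  have K1: "le (m (imp x y) (j x y)) y" for x y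
  proof -
    have "le (m (imp x y) x) y" using res1[of "imp x y" x y] refl[of "imp x y"] by simp
    then have "le x (limp (imp x y) y)" using res2[of "imp x y" x y] by simp
    moreover have "le y (limp (imp x y) y)"
    proof -
      have "le (m (imp x y) y) (m one y)" using mono[OF top[of "imp x y"], of y] by simp
      then have "le (m (imp x y) y) y" using u1 by simp
      then show ?thesis using res2[of "imp x y" y y] by simp
    qed
    ultimately have "le (j x y) (limp (imp x y) y)" by (rule j3)
    then show ?thesis using res2[of "imp x y" "j x y" y] by simp
  qed
  have K2: "le (m (j x y) (limp x y)) y" for x y
  proof -
    have "le (m x (limp x y)) y" using res2[of x "limp x y" y] refl[of "limp x y"] by simp
    then have "le x (imp (limp x y) y)" using res1[of x "limp x y" y] by simp
    moreover have "le y (imp (limp x y) y)"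
    proof -
      have "le (m y (limp x y)) (m y one)" using mono[OF top[of "limp x y"], of y] by simp
      then have "le (m y (limp x y)) y" using u2 by simp
      then show ?thesis using res1[of y "limp x y" y] by simp
    qed
    ultimately have "le (j x y) (imp (limp x y) y)" by (rule j3)
    then show ?thesis using res1[of "j x y" "limp x y" y] by simp
  qed
  have jc: "j x y = j y x" for x y by (rule antis; rule j3; rule j1 j2)
  show "res_prime imp F \<Longrightarrow> join_prime j F"
    unfolding res_prime_def join_prime_def
  proof (intro allI impI)
    fix x y assume p: "\<forall>x y. imp x y \<in> F \<or> imp y x \<in> F" and xy: "j x y \<in> F"
    have xy': "j y x \<in> F" using xy jc[of x y] by simp
    from p consider "imp x y \<in> F" | "imp y x \<in> F" by blast
    then show "x \<in> F \<or> y \<in> F"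
    proof cases
      case 1 then show ?thesis using mu[OF 1 xy] K1[of x y] up by blast
    next
      case 2 then show ?thesis using mu[OF 2 xy'] K1[of y x] up by blast
    qed
  qed
  show "mtl_wrt imp j one \<Longrightarrow> join_prime j F \<Longrightarrow> res_prime imp F"
    unfolding res_prime_def join_prime_def mtl_wrt_def using oneF by simp
  show "res_prime limp F \<Longrightarrow> join_prime j F"
    unfolding res_prime_def join_prime_def
  proof (intro allI impI)
    fix x y assume p: "\<forall>x y. limp x y \<in> F \<or> limp y x \<in> F" and xy: "j x y \<in> F"
    have xy': "j y x \<in> F" using xy jc[of x y] by simp
    from p consider "limp x y \<in> F" | "limp y x \<in> F" by blast
    then show "x \<in> F \<or> y \<in> F"
    proof cases
      case 1 then show ?thesis using mu[OF xy 1] K2[of x y] up by blast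
    next
      case 2 then show ?thesis using mu[OF xy' 2] K2[of y x] up by blast
    qed
  qed
  show "mtl_wrt limp j one \<Longrightarrow> join_prime j F \<Longrightarrow> res_prime limp F"
    unfolding res_prime_def join_prime_def mtl_wrt_def using oneF by simp
qed

theorem lemma5p4:
  fixes le :: "'a \<Rightarrow> 'a \<Rightarrow> bool" and m imp limp j :: "'a \<Rightarrow> 'a \<Rightarrow> 'a" and one :: 'a
  assumes A: "int_res_join_semilattice le m imp limp j one"
  shows "(mtl_wrt imp j one \<longrightarrow>
            (\<forall>F. is_filter le m F \<longrightarrow> (res_prime imp F \<longleftrightarrow> join_prime j F)))
       \<and> (mtl_wrt limp j one \<longrightarrow>
            (\<forall>F. is_filter le m F \<longrightarrow> (res_prime limp F \<longleftrightarrow> join_prime j F)))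
       \<and> (mtl_wrt imp j one \<and> mtl_wrt limp j one \<longrightarrow>
            (\<forall>F. is_filter le m F \<longrightarrow>
               (res_prime imp F \<and> res_prime limp F \<longleftrightarrow> join_prime j F)))"
  using imp_part[OF A] by blast

end
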